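(* Let $G=(V,E)$ be a strongly connected weighted directed graph and $\delta\in[0,1]$. For any $T\subseteq S\subseteq V$, $$\mathsf{fp}_{r=1}^\delta(G,S)=\mathsf{fp}_{r=1}^\delta(G,T)+\mathsf{fp}_{r=1}^\delta(G,S\setminus T).$$
   Context: Mixed $\delta$-updating on a weighted directed graph with weights $w_{uv}\ge0$ ($u\to v$ is an edge iff $w_{uv}>0$): each vertex holds a mutant (fitness $r$) or wild-type (fitness $1$); $f_S(u)$ is the fitness at $u$ when $S$ is the mutant set. At each step, with probability $\delta$ a death-Birth step: choose $v$ uniformly to die, choose $u$ with probability proportional to $f_S(u)w_{uv}$, $u$ copies its type onto $v$; with probability $1-\delta$ a Birth-death step: choose $u$ with probability proportional to $f_S(u)$, choose $v$ with probability proportional to $w_{uv}$, $u$ copies its type onto $v$. $\mathsf{fp}_r^\delta(G,S_0)$ is the probability all vertices eventually become mutant from initial mutant set $S_0$. *)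

theory Defs
  imports Complex_Main
begin

definition edges :: "'v set \<Rightarrow> ('v \<Rightarrow> 'v \<Rightarrow> real) \<Rightarrow> ('v \<times> 'v) set" where
  "edges V w = {(u, v). u \<in> V \<and> v \<in> V \<and> w u v > 0}"

definition strongly_connected :: "'v set \<Rightarrow> ('v \<Rightarrow> 'v \<Rightarrow> real) \<Rightarrow> bool" where
  "strongly_connected V w \<longleftrightarrow> (\<forall>u\<in>V. \<forall>v\<in>V. (u, v) \<in> (edges V w)\<^sup>*)"

definition fit :: "real \<Rightarrow> 'v set \<Rightarrow> 'v \<Rightarrow> real" where
  "fit r S u = (if u \<in> S then r else 1)"

text \<open>Result of u copying its type onto v.\<close>
definition upd :: "'v set \<Rightarrow> 'v \<Rightarrow> 'v \<Rightarrow> 'v set" where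
  "upd S u v = (if u \<in> S then insert v S else S - {v})"

definition trans_prob ::
  "'v set \<Rightarrow> ('v \<Rightarrow> 'v \<Rightarrow> real) \<Rightarrow> real \<Rightarrow> real \<Rightarrow> 'v set \<Rightarrow> 'v set \<Rightarrow> real" where
  "trans_prob V w r \<delta> S S' =
     \<delta> * (\<Sum>v\<in>V. (1 / real (card V)) *
            (\<Sum>u\<in>V. (fit r S u * w u v / (\<Sum>x\<in>V. fit r S x * w x v)) *
                      (if upd S u v = S' then 1 else 0)))
   + (1 - \<delta>) * (\<Sum>u\<in>V. (fit r S u / (\<Sum>x\<in>V. fit r S x)) *
            (\<Sum>v\<in>V. (w u v / (\<Sum>y\<in>V. w u y)) *
                      (if upd S u v = S' then 1 else 0)))"

fun all_mutant_prob ::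
  "'v set \<Rightarrow> ('v \<Rightarrow> 'v \<Rightarrow> real) \<Rightarrow> real \<Rightarrow> real \<Rightarrow> nat \<Rightarrow> 'v set \<Rightarrow> real" where
  "all_mutant_prob V w r \<delta> 0 S = (if S = V then 1 else 0)"
| "all_mutant_prob V w r \<delta> (Suc n) S =
     (\<Sum>S'\<in>Pow V. trans_prob V w r \<delta> S S' * all_mutant_prob V w r \<delta> n S')"

text \<open>Fixation probability: probability that all vertices eventually become mutant
  (the all-mutant state is absorbing, so this is the supremum/limit over n).\<close>
definition fp :: "'v set \<Rightarrow> ('v \<Rightarrow> 'v \<Rightarrow> real) \<Rightarrow> real \<Rightarrow> real \<Rightarrow> 'v set \<Rightarrow> real" where
  "fp V w r \<delta> S0 = (SUP n. all_mutant_prob V w r \<delta> n S0)"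

end

theory Submission
  imports Defs
begin

locale nd =
  fixes V :: "'v set" and w :: "'v \<Rightarrow> 'v \<Rightarrow> real" and \<delta> :: real
  assumes fin: "finite V" and ne: "V \<noteq> {}"
    and wnn: "\<And>u v. w u v \<ge> 0"
    and d0: "0 \<le> \<delta>" and d1: "\<delta> \<le> 1"
begin

definition din where "din v = (\<Sum>x\<in>V. w x v)"
definition dout where "dout u = (\<Sum>y\<in>V. w u y)"
definition q where
  "q u v = \<delta> * (1 / real (card V)) * (w u v / din v)
         + (1 - \<delta>) * (1 / real (card V)) * (w u v / dout u)"

lemma din_nn: "din v \<ge> 0" unfolding din_def by (simp add: sum_nonneg wnn)
lemma dout_nn: "dout v \<ge> 0" unfolding dout_def by (simp add: sum_nonneg wnn)

lemma q_nn: "q u v \<ge> 0"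
  unfolding q_def using d0 d1 din_nn dout_nn wnn
  by (intro add_nonneg_nonneg mult_nonneg_nonneg divide_nonneg_nonneg) auto

lemma tp: "trans_prob V w 1 \<delta> S S' =
   (\<Sum>u\<in>V. \<Sum>v\<in>V. q u v * (if upd S u v = S' then 1 else 0))"
proof -
  have f: "fit 1 S x = 1" for x by (simp add: fit_def)
  have "trans_prob V w 1 \<delta> S S' =
     \<delta> * (\<Sum>v\<in>V. (1 / real (card V)) *
            (\<Sum>u\<in>V. (w u v / din v) * (if upd S u v = S' then 1 else 0)))
   + (1 - \<delta>) * (\<Sum>u\<in>V. (1 / real (card V)) *
            (\<Sum>v\<in>V. (w u v / dout u) * (if upd S u v = S' then 1 else 0)))"
    unfolding trans_prob_def f din_def dout_def by simp
  also have "\<dots> = (\<Sum>v\<in>V. \<Sum>u\<in>V. \<delta> * (1 / real (card V)) * (w u v / din v) * (if upd S u v = S' then 1 else 0))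
     + (\<Sum>u\<in>V. \<Sum>v\<in>V. (1 - \<delta>) * (1 / real (card V)) * (w u v / dout u) * (if upd S u v = S' then 1 else 0))"
    by (simp add: sum_distrib_left mult.assoc)
  also have "\<dots> = (\<Sum>u\<in>V. \<Sum>v\<in>V. \<delta> * (1 / real (card V)) * (w u v / din v) * (if upd S u v = S' then 1 else 0))
     + (\<Sum>u\<in>V. \<Sum>v\<in>V. (1 - \<delta>) * (1 / real (card V)) * (w u v / dout u) * (if upd S u v = S' then 1 else 0))"
    by (subst sum.swap) simp
  also have "\<dots> = (\<Sum>u\<in>V. \<Sum>v\<in>V. q u v * (if upd S u v = S' then 1 else 0))"
    unfolding q_def by (simp add: sum.distrib[symmetric] distrib_right)
  finally show ?thesis .
qed

lemma upd_sub: "S \<subseteq> V \<Longrightarrow> v \<in> V \<Longrightarrow> upd S u v \<subseteq> V"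
  by (auto simp: upd_def)

lemma step_sum:
  assumes "S \<subseteq> V"
  shows "(\<Sum>S'\<in>Pow V. trans_prob V w 1 \<delta> S S' * f S') = (\<Sum>u\<in>V. \<Sum>v\<in>V. q u v * f (upd S u v))"
proof -
  have "(\<Sum>S'\<in>Pow V. trans_prob V w 1 \<delta> S S' * f S')
      = (\<Sum>S'\<in>Pow V. \<Sum>u\<in>V. \<Sum>v\<in>V. q u v * (if upd S u v = S' then f S' else 0))"
    unfolding tp sum_distrib_right by (intro sum.cong refl) simp
  also have "\<dots> = (\<Sum>u\<in>V. \<Sum>v\<in>V. \<Sum>S'\<in>Pow V. q u v * (if upd S u v = S' then f S' else 0))"
    by (subst sum.swap) (simp add: sum.swap[of _ "Pow V"])
  also have "\<dots> = (\<Sum>u\<in>V. \<Sum>v\<in>V. q u v * f (upd S u v))"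
    using assms fin by (intro sum.cong refl) (simp add: sum_distrib_left[symmetric] upd_sub)
  finally show ?thesis .
qed

definition p where "p n S = all_mutant_prob V w 1 \<delta> n S"

lemma p_Suc: "S \<subseteq> V \<Longrightarrow> p (Suc n) S = (\<Sum>u\<in>V. \<Sum>v\<in>V. q u v * p n (upd S u v))"
  unfolding p_def by (simp add: step_sum)

lemma upd_empty: "upd {} u v = {}" by (simp add: upd_def)

lemma p_empty: "p n {} = 0"
proof (induction n)
  case 0 then show ?case using ne by (simp add: p_def)
next
  case (Suc n) then show ?case by (simp add: p_Suc upd_empty)
qed

lemma sum_in_le: "(\<Sum>u\<in>V. w u v / din v) \<le> 1"
proof -
  have "(\<Sum>u\<in>V. w u v / din v) = din v / din v" unfolding din_def by (simp add: sum_divide_distrib[symmetric])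
  also have "\<dots> \<le> 1" by (cases "din v = 0") auto
  finally show ?thesis .
qed

lemma sum_out_le: "(\<Sum>v\<in>V. w u v / dout u) \<le> 1"
proof -
  have "(\<Sum>v\<in>V. w u v / dout u) = dout u / dout u" unfolding dout_def by (simp add: sum_divide_distrib[symmetric])
  also have "\<dots> \<le> 1" by (cases "dout u = 0") auto
  finally show ?thesis .
qed

lemma q_sum_eq: "(\<Sum>u\<in>V. \<Sum>v\<in>V. q u v) =
   \<delta> * (1 / real (card V)) * (\<Sum>v\<in>V. \<Sum>u\<in>V. w u v / din v)
   + (1 - \<delta>) * (1 / real (card V)) * (\<Sum>u\<in>V. \<Sum>v\<in>V. w u v / dout u)"
proof -
  have "(\<Sum>u\<in>V. \<Sum>v\<in>V. q u v) =
     (\<Sum>u\<in>V. \<Sum>v\<in>V. \<delta> * (1 / real (card V)) * (w u v / din v))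
   + (\<Sum>u\<in>V. \<Sum>v\<in>V. (1 - \<delta>) * (1 / real (card V)) * (w u v / dout u))"
    unfolding q_def by (simp add: sum.distrib)
  also have "(\<Sum>u\<in>V. \<Sum>v\<in>V. \<delta> * (1 / real (card V)) * (w u v / din v))
     = (\<Sum>v\<in>V. \<Sum>u\<in>V. \<delta> * (1 / real (card V)) * (w u v / din v))"
    by (rule sum.swap)
  finally show ?thesis by (simp add: sum_distrib_left)
qed

lemma q_sum_le: "(\<Sum>u\<in>V. \<Sum>v\<in>V. q u v) \<le> 1"
proof -
  have N: "real (card V) > 0" using fin ne by (simp add: card_gt_0_iff)
  have a: "(\<Sum>v\<in>V. \<Sum>u\<in>V. w u v / din v) \<le> real (card V)"
    using sum_mono[of V "\<lambda>v. \<Sum>u\<in>V. w u v / din v" "\<lambda>_. 1", OF sum_in_le] by simp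
  have b: "(\<Sum>u\<in>V. \<Sum>v\<in>V. w u v / dout u) \<le> real (card V)"
    using sum_mono[of V "\<lambda>u. \<Sum>v\<in>V. w u v / dout u" "\<lambda>_. 1", OF sum_out_le] by simp
  have "\<delta> * (1 / real (card V)) * (\<Sum>v\<in>V. \<Sum>u\<in>V. w u v / din v) \<le> \<delta> * (1 / real (card V)) * real (card V)"
    using a d0 N by (intro mult_left_mono) auto
  moreover have "(1 - \<delta>) * (1 / real (card V)) * (\<Sum>u\<in>V. \<Sum>v\<in>V. w u v / dout u) \<le> (1 - \<delta>) * (1 / real (card V)) * real (card V)"
    using b d1 N by (intro mult_left_mono) auto
  ultimately show ?thesis unfolding q_sum_eq using N by simp
qed

lemma q_sum_eq1:
  assumes "\<And>v. v \<in> V \<Longrightarrow> din v > 0" "\<And>u. u \<in> V \<Longrightarrow> dout u > 0"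
  shows "(\<Sum>u\<in>V. \<Sum>v\<in>V. q u v) = 1"
proof -
  have N: "real (card V) > 0" using fin ne by (simp add: card_gt_0_iff)
  have a: "(\<Sum>v\<in>V. \<Sum>u\<in>V. w u v / din v) = real (card V)"
  proof -
    have "(\<Sum>u\<in>V. w u v / din v) = 1" if "v \<in> V" for v
      using assms(1)[OF that] unfolding din_def by (simp add: sum_divide_distrib[symmetric])
    then show ?thesis by simp
  qed
  have b: "(\<Sum>u\<in>V. \<Sum>v\<in>V. w u v / dout u) = real (card V)"
  proof -
    have "(\<Sum>v\<in>V. w u v / dout u) = 1" if "u \<in> V" for u
      using assms(2)[OF that] unfolding dout_def by (simp add: sum_divide_distrib[symmetric])
    then show ?thesis by simp
  qed
  show ?thesis unfolding q_sum_eq a b using N by (simp add: field_simps)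
qed

lemma p_bounds: "S \<subseteq> V \<Longrightarrow> 0 \<le> p n S \<and> p n S \<le> 1"
proof (induction n arbitrary: S)
  case 0 then show ?case by (simp add: p_def)
next
  case (Suc n)
  have "0 \<le> p (Suc n) S" unfolding p_Suc[OF Suc.prems]
    using Suc.IH upd_sub Suc.prems q_nn by (intro sum_nonneg mult_nonneg_nonneg) auto
  moreover have "p (Suc n) S \<le> (\<Sum>u\<in>V. \<Sum>v\<in>V. q u v)" unfolding p_Suc[OF Suc.prems]
    using Suc.IH upd_sub Suc.prems q_nn
    by (intro sum_mono) (simp add: mult_left_le)
  ultimately show ?case using q_sum_le by linarith
qed

lemma upd_V: "u \<in> V \<Longrightarrow> v \<in> V \<Longrightarrow> upd V u v = V"
  by (auto simp: upd_def)

lemma p_mono: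
  assumes "(\<Sum>u\<in>V. \<Sum>v\<in>V. q u v) = 1"
  shows "S \<subseteq> V \<Longrightarrow> p n S \<le> p (Suc n) S"
proof (induction n arbitrary: S)
  case 0
  show ?case
  proof (cases "S = V")
    case True
    have pV: "p 0 V = 1" unfolding p_def by simp
    have "p (Suc 0) S = (\<Sum>u\<in>V. \<Sum>v\<in>V. q u v * p 0 (upd S u v))" by (rule p_Suc[OF 0])
    also have "\<dots> = (\<Sum>u\<in>V. \<Sum>v\<in>V. q u v)"
      using True pV upd_V by (intro sum.cong refl) simp
    finally show ?thesis using assms True pV by simp
  next
    case False
    have "p 0 S = 0" unfolding p_def using False by simp
    then show ?thesis using p_bounds[OF 0, of "Suc 0"] by simp
  qed
next
  case (Suc n)
  have "p (Suc n) S = (\<Sum>u\<in>V. \<Sum>v\<in>V. q u v * p n (upd S u v))" by (rule p_Suc[OF Suc.prems])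
  also have "\<dots> \<le> (\<Sum>u\<in>V. \<Sum>v\<in>V. q u v * p (Suc n) (upd S u v))"
  proof (intro sum_mono mult_left_mono q_nn)
    fix u v assume "u \<in> V" "v \<in> V"
    show "p n (upd S u v) \<le> p (Suc n) (upd S u v)" by (rule Suc.IH[OF upd_sub[OF Suc.prems \<open>v \<in> V\<close>]])
  qed
  also have "\<dots> = p (Suc (Suc n)) S" by (rule p_Suc[OF Suc.prems, symmetric])
  finally show ?case .
qed

definition E where "E n A B = p n (A \<union> B) - p n A - p n B"

lemma upd_Un: "upd (A \<union> B) u v = upd A u v \<union> upd B u v"
  by (auto simp: upd_def)

lemma E_Suc: "A \<subseteq> V \<Longrightarrow> B \<subseteq> V \<Longrightarrow>
   E (Suc n) A B = (\<Sum>u\<in>V. \<Sum>v\<in>V. q u v * E n (upd A u v) (upd B u v))"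
  unfolding E_def by (simp add: p_Suc upd_Un sum_subtractf right_diff_distrib)

definition D where "D A B \<longleftrightarrow> A \<subseteq> V \<and> B \<subseteq> V \<and> A \<inter> B = {}"

lemma D_upd: "D A B \<Longrightarrow> v \<in> V \<Longrightarrow> D (upd A u v) (upd B u v)"
  unfolding D_def upd_def by auto

definition h0 :: "'v set \<Rightarrow> 'v set \<Rightarrow> real" where
  "h0 A B = (if A \<noteq> {} \<and> B \<noteq> {} then 1 else 0)"

definition PP :: "('v set \<Rightarrow> 'v set \<Rightarrow> real) \<Rightarrow> 'v set \<Rightarrow> 'v set \<Rightarrow> real" where
  "PP f A B = (\<Sum>u\<in>V. \<Sum>v\<in>V. q u v * f (upd A u v) (upd B u v))"

definition h where "h n = (PP ^^ n) h0"

lemma h_Suc: "h (Suc n) A B = (\<Sum>u\<in>V. \<Sum>v\<in>V. q u v * h n (upd A u v) (upd B u v))"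
  unfolding h_def by (simp add: PP_def)

lemma PP_mono:
  assumes "\<And>A B. D A B \<Longrightarrow> f A B \<le> g A B"
  shows "D A B \<Longrightarrow> (PP ^^ n) f A B \<le> (PP ^^ n) g A B"
proof (induction n arbitrary: A B)
  case 0 then show ?case using assms by simp
next
  case (Suc n)
  have "(PP ^^ Suc n) f A B = (\<Sum>u\<in>V. \<Sum>v\<in>V. q u v * (PP ^^ n) f (upd A u v) (upd B u v))"
    by (simp add: PP_def)
  also have "\<dots> \<le> (\<Sum>u\<in>V. \<Sum>v\<in>V. q u v * (PP ^^ n) g (upd A u v) (upd B u v))"
  proof (intro sum_mono mult_left_mono q_nn)
    fix u v assume "u \<in> V" "v \<in> V"
    show "(PP ^^ n) f (upd A u v) (upd B u v) \<le> (PP ^^ n) g (upd A u v) (upd B u v)"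
      by (rule Suc.IH[OF D_upd[OF Suc.prems \<open>v \<in> V\<close>]])
  qed
  also have "\<dots> = (PP ^^ Suc n) g A B" by (simp add: PP_def)
  finally show ?case .
qed

lemma PP_scale: "(PP ^^ n) (\<lambda>A B. c * f A B) = (\<lambda>A B. c * (PP ^^ n) f A B)"
proof (induction n)
  case 0 then show ?case by simp
next
  case (Suc n) then show ?case
    by (simp add: PP_def sum_distrib_left mult.left_commute)
qed

lemma E_bounds: "D A B \<Longrightarrow> 0 \<le> E n A B \<and> E n A B \<le> h n A B"
proof (induction n arbitrary: A B)
  case 0
  then show ?case using ne unfolding E_def D_def h_def h0_def
    by (auto simp: p_def)
next
  case (Suc n)
  have AB: "A \<subseteq> V" "B \<subseteq> V" using Suc.prems by (auto simp: D_def)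
  have "0 \<le> E (Suc n) A B" unfolding E_Suc[OF AB]
    using Suc.IH D_upd Suc.prems q_nn by (intro sum_nonneg mult_nonneg_nonneg) auto
  moreover have "E (Suc n) A B \<le> h (Suc n) A B" unfolding E_Suc[OF AB] h_Suc
  proof (intro sum_mono mult_left_mono q_nn)
    fix u v assume "u \<in> V" "v \<in> V"
    show "E n (upd A u v) (upd B u v) \<le> h n (upd A u v) (upd B u v)"
      using Suc.IH[OF D_upd[OF Suc.prems \<open>v \<in> V\<close>]] by simp
  qed
  ultimately show ?case by blast
qed

lemma h_bounds: "0 \<le> h n A B \<and> h n A B \<le> 1"
proof (induction n arbitrary: A B)
  case 0 then show ?case by (simp add: h_def h0_def)
next
  case (Suc n)
  have "0 \<le> h (Suc n) A B" unfolding h_Suc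
    using Suc.IH q_nn by (intro sum_nonneg mult_nonneg_nonneg) auto
  moreover have "h (Suc n) A B \<le> (\<Sum>u\<in>V. \<Sum>v\<in>V. q u v)" unfolding h_Suc
    using Suc.IH q_nn by (intro sum_mono) (simp add: mult_left_le)
  ultimately show ?case using q_sum_le by linarith
qed

lemma h_emptyA: "h n {} B = 0"
  by (induction n arbitrary: B) (simp_all add: h_def h0_def PP_def upd_empty)

lemma h_emptyB: "h n A {} = 0"
  by (induction n arbitrary: A) (simp_all add: h_def h0_def PP_def upd_empty)

end

locale nd2 = nd +
  assumes wV: "\<And>u v. w u v > 0 \<Longrightarrow> u \<in> V \<and> v \<in> V"
    and sc: "strongly_connected V w"
begin

lemma edge_out:
  assumes "b \<in> B" "B \<subseteq> V" "x \<in> V" "x \<notin> B"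
  shows "\<exists>u\<in>B. \<exists>v\<in>V - B. w u v > 0"
proof -
  have r: "(b, x) \<in> (edges V w)\<^sup>*" using sc assms unfolding strongly_connected_def by blast
  have "y \<in> B \<or> (\<exists>u\<in>B. \<exists>v\<in>V - B. w u v > 0)" if "(b, y) \<in> (edges V w)\<^sup>*" for y
    using that
  proof (induction rule: rtrancl_induct)
    case base then show ?case using assms by simp
  next
    case (step y z)
    then show ?case unfolding edges_def by auto
  qed
  from this[OF r] assms show ?thesis by blast
qed

lemma din_pos:
  assumes "v \<in> V" "x \<in> V" "x \<noteq> v"
  shows "din v > 0"
proof -
  have "(x, v) \<in> (edges V w)\<^sup>*" using sc assms unfolding strongly_connected_def by blast
  then obtain y where "(y, v) \<in> edges V w" using assms(3) by (meson rtranclE)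
  then have y: "y \<in> V" "w y v > 0" unfolding edges_def by auto
  have "w y v \<le> din v" unfolding din_def using fin y wnn by (intro member_le_sum) auto
  then show ?thesis using y by simp
qed

lemma dout_pos:
  assumes "u \<in> V" "x \<in> V" "x \<noteq> u"
  shows "dout u > 0"
proof -
  have "(u, x) \<in> (edges V w)\<^sup>*" using sc assms unfolding strongly_connected_def by blast
  then obtain y where "(u, y) \<in> edges V w" using assms(3) by (metis converse_rtranclE)
  then have y: "y \<in> V" "w u y > 0" unfolding edges_def by auto
  have "w u y \<le> dout u" unfolding dout_def using fin y wnn by (intro member_le_sum) auto
  then show ?thesis using y by simp
qed

lemma q_pos: assumes "w u v > 0" shows "q u v > 0"
proof -
  have uv: "u \<in> V" "v \<in> V" using wV assms by auto
  have a: "w u v \<le> din v" unfolding din_def using fin uv wnn by (intro member_le_sum) auto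
  have b: "w u v \<le> dout u" unfolding dout_def using fin uv wnn by (intro member_le_sum) auto
  have N: "real (card V) > 0" using fin ne by (simp add: card_gt_0_iff)
  have a': "w u v / din v > 0" using a assms by simp
  have b': "w u v / dout u > 0" using b assms by simp
  show ?thesis
  proof (cases "\<delta> = 0")
    case True
    have "(1 / real (card V)) * (w u v / dout u) > 0" using b' N by (intro mult_pos_pos) auto
    then show ?thesis unfolding q_def using True by simp
  next
    case False
    then have "\<delta> * (1 / real (card V)) * (w u v / din v) > 0" using d0 N a' by (intro mult_pos_pos) auto
    moreover have "(1 - \<delta>) * (1 / real (card V)) * (w u v / dout u) \<ge> 0"
      using d1 N b' by (intro mult_nonneg_nonneg) auto
    ultimately show ?thesis unfolding q_def by linarith
  qed
qed

definition m where "m = Min (insert 1 ((\<lambda>(u, v). q u v) ` {(u, v). u \<in> V \<and> v \<in> V \<and> w u v > 0}))"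

lemma m_fin: "finite ((\<lambda>(u, v). q u v) ` {(u, v). u \<in> V \<and> v \<in> V \<and> w u v > 0})"
proof -
  have "{(u, v). u \<in> V \<and> v \<in> V \<and> w u v > 0} \<subseteq> V \<times> V" by auto
  then show ?thesis using fin by (meson finite_SigmaI finite_imageI finite_subset)
qed

lemma m_pos: "m > 0"
  unfolding m_def using m_fin q_pos by (auto simp: Min_gr_iff)

lemma m_le1: "m \<le> 1"
  unfolding m_def using m_fin by simp

lemma m_le_q: "w u v > 0 \<Longrightarrow> m \<le> q u v"
  unfolding m_def using m_fin wV by (intro Min_le) force+

lemma h_decay:
  "D A B \<Longrightarrow> B \<noteq> {} \<Longrightarrow> card (V - B) \<le> k \<Longrightarrow> h k A B \<le> 1 - m ^ k"
proof (induction k arbitrary: A B)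
  case 0
  then have "B = V" using fin by (auto simp: D_def)
  then have "A = {}" using 0 by (auto simp: D_def)
  then show ?case by (simp add: h_emptyA)
next
  case (Suc k)
  show ?case
  proof (cases "B = V")
    case True
    then have "A = {}" using Suc.prems by (auto simp: D_def)
    moreover have "m ^ Suc k \<le> 1" using m_pos m_le1 by (intro power_le_one) auto
    ultimately show ?thesis by (simp add: h_emptyA)
  next
    case False
    have BV: "B \<subseteq> V" using Suc.prems by (auto simp: D_def)
    obtain b where b: "b \<in> B" using Suc.prems by auto
    obtain x where x: "x \<in> V" "x \<notin> B" using False BV by auto
    obtain u v where uv: "u \<in> B" "v \<in> V - B" "w u v > 0" using edge_out[OF b BV x] by blast
    have uV: "u \<in> V" using uv BV by auto
    have uA: "u \<notin> A" using uv Suc.prems by (auto simp: D_def)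
    have Dn: "D (upd A u v) (upd B u v)" using D_upd Suc.prems uv by auto
    have uB: "upd B u v = insert v B" using uv by (simp add: upd_def)
    have "card (V - insert v B) = card (V - B) - 1"
      using uv fin by (metis Diff_insert card_Diff_singleton finite_Diff)
    then have ck: "card (V - upd B u v) \<le> k" using Suc.prems uB by simp
    have IH: "h k (upd A u v) (upd B u v) \<le> 1 - m ^ k"
      using Suc.IH[OF Dn _ ck] uB by simp
    let ?g = "\<lambda>u' v'. q u' v' * (1 - h k (upd A u' v') (upd B u' v'))"
    have gnn: "?g u' v' \<ge> 0" for u' v' using q_nn h_bounds by simp
    have "?g u v \<le> (\<Sum>v'\<in>V. ?g u v')"
      using uv fin gnn by (intro member_le_sum) auto
    also have "\<dots> \<le> (\<Sum>u'\<in>V. \<Sum>v'\<in>V. ?g u' v')"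
      using uV fin gnn by (intro member_le_sum[of u V "\<lambda>u'. \<Sum>v'\<in>V. ?g u' v'"] sum_nonneg) auto
    finally have g1: "?g u v \<le> (\<Sum>u'\<in>V. \<Sum>v'\<in>V. ?g u' v')" .
    have "h (Suc k) A B = (\<Sum>u'\<in>V. \<Sum>v'\<in>V. q u' v') - (\<Sum>u'\<in>V. \<Sum>v'\<in>V. ?g u' v')"
      unfolding h_Suc by (simp add: sum_subtractf[symmetric] right_diff_distrib)
    also have "\<dots> \<le> 1 - ?g u v" using g1 q_sum_le by linarith
    also have "?g u v \<ge> m * m ^ k"
    proof -
      have "m ^ k \<le> 1 - h k (upd A u v) (upd B u v)" using IH by simp
      moreover have "m \<le> q u v" using m_le_q uv by simp
      ultimately show ?thesis using m_pos by (intro mult_mono) auto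
    qed
    then have "1 - ?g u v \<le> 1 - m ^ Suc k" by simp
    finally show ?thesis .
  qed
qed



definition cc where "cc = 1 - m ^ card V"

lemma cc_bounds: "0 \<le> cc" "cc < 1"
proof -
  have "m ^ card V > 0" using m_pos by (rule zero_less_power)
  moreover have "m ^ card V \<le> 1" using m_pos m_le1 by (intro power_le_one) auto
  ultimately show "0 \<le> cc" "cc < 1" unfolding cc_def by linarith+
qed

lemma h_N: "D A B \<Longrightarrow> h (card V) A B \<le> cc * h0 A B"
proof (cases "A = {} \<or> B = {}")
  case True then show ?thesis by (auto simp: h_emptyA h_emptyB h0_def)
next
  case False
  moreover assume "D A B"
  moreover have "card (V - B) \<le> card V" using fin by (simp add: card_mono)
  ultimately have "h (card V) A B \<le> 1 - m ^ card V" by (intro h_decay) auto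
  then show ?thesis using False unfolding cc_def h0_def by simp
qed

lemma h_jN: "D A B \<Longrightarrow> h (j * card V) A B \<le> cc ^ j"
proof (induction j)
  case 0 then show ?case using h_bounds[of 0 A B] by simp
next
  case (Suc j)
  have "h (Suc j * card V) A B = (PP ^^ (j * card V)) ((PP ^^ card V) h0) A B"
  proof -
    have "Suc j * card V = j * card V + card V" by simp
    then show ?thesis unfolding h_def by (simp only: funpow_add comp_def)
  qed
  also have "\<dots> \<le> (PP ^^ (j * card V)) (\<lambda>A B. cc * h0 A B) A B"
    using h_N Suc.prems unfolding h_def by (intro PP_mono) auto
  also have "\<dots> = cc * h (j * card V) A B" unfolding PP_scale h_def by simp
  also have "\<dots> \<le> cc * cc ^ j" using Suc cc_bounds by (intro mult_left_mono) auto
  finally show ?case by simp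
qed

lemma fp_empty: "fp V w 1 \<delta> {} = 0"
  using p_empty unfolding fp_def p_def by simp

lemma main:
  assumes "T \<subseteq> S" "S \<subseteq> V"
  shows "fp V w 1 \<delta> S = fp V w 1 \<delta> T + fp V w 1 \<delta> (S - T)"
proof (cases "T = {} \<or> S - T = {}")
  case True
  show ?thesis
  proof (cases "T = {}")
    case True then show ?thesis using fp_empty by simp
  next
    case False
    then have "S - T = {}" using \<open>T = {} \<or> S - T = {}\<close> by blast
    then have "T = S" using assms(1) by blast
    then show ?thesis using fp_empty by simp
  qed
next
  case False
  then obtain a b where ab: "a \<in> T" "b \<in> S - T" by auto
  have abV: "a \<in> V" "b \<in> V" "a \<noteq> b" using ab assms by auto
  have q1: "(\<Sum>u\<in>V. \<Sum>v\<in>V. q u v) = 1"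
  proof (rule q_sum_eq1)
    fix v assume "v \<in> V"
    then show "din v > 0" using abV din_pos by (cases "v = a") auto
  next
    fix u assume "u \<in> V"
    then show "dout u > 0" using abV dout_pos by (cases "u = a") auto
  qed
  have lim: "(\<lambda>n. p n X) \<longlonglongrightarrow> fp V w 1 \<delta> X" if "X \<subseteq> V" for X
  proof -
    have "(\<lambda>n. p n X) \<longlonglongrightarrow> (SUP n. p n X)"
    proof (rule LIMSEQ_incseq_SUP)
      show "bdd_above (range (\<lambda>n. p n X))" using p_bounds[OF that]
        by (intro bdd_aboveI[of _ 1]) auto
      show "incseq (\<lambda>n. p n X)" using p_mono[OF q1 that] by (simp add: incseq_SucI)
    qed
    then show ?thesis unfolding fp_def p_def .
  qed
  define L where "L = fp V w 1 \<delta> S - fp V w 1 \<delta> T - fp V w 1 \<delta> (S - T)"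
  have TS: "T \<union> (S - T) = S" using assms by auto
  have EL: "(\<lambda>n. E n T (S - T)) \<longlonglongrightarrow> L"
    unfolding E_def L_def TS using assms
    by (intro tendsto_diff lim) auto
  have DT: "D T (S - T)" using assms by (auto simp: D_def)
  have L0: "L \<ge> 0"
  proof (rule tendsto_lowerbound[OF EL])
    show "\<forall>\<^sub>F n in sequentially. 0 \<le> E n T (S - T)"
      using E_bounds[OF DT] by (simp add: always_eventually)
  qed simp
  have Npos: "card V > 0" using fin ne by (simp add: card_gt_0_iff)
  have sm: "strict_mono (\<lambda>j. j * card V)" using Npos by (simp add: strict_mono_def)
  have EL2: "(\<lambda>j. E (j * card V) T (S - T)) \<longlonglongrightarrow> L"
    using LIMSEQ_subseq_LIMSEQ[OF EL sm] by (simp add: comp_def)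
  have C0: "(\<lambda>j. cc ^ j) \<longlonglongrightarrow> 0" using cc_bounds by (intro LIMSEQ_power_zero) auto
  have "L \<le> 0"
  proof (rule LIMSEQ_le[OF EL2 C0])
    show "\<exists>N. \<forall>n\<ge>N. E (n * card V) T (S - T) \<le> cc ^ n"
    proof (intro exI[of _ 0] allI impI)
      fix n :: nat
      show "E (n * card V) T (S - T) \<le> cc ^ n"
        using E_bounds[OF DT, of "n * card V"] h_jN[OF DT, of n] by linarith
    qed
  qed
  with L0 have "L = 0" by simp
  then show ?thesis unfolding L_def by simp
qed

end

theorem mainTheorem9:
  fixes V :: "'v set" and w :: "'v \<Rightarrow> 'v \<Rightarrow> real" and \<delta> :: real and S T :: "'v set"
  assumes "finite V" and "V \<noteq> {}"
    and "\<And>u v. w u v \<ge> 0"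
    and "\<And>u v. w u v > 0 \<Longrightarrow> u \<in> V \<and> v \<in> V"
    and "strongly_connected V w"
    and "0 \<le> \<delta>" and "\<delta> \<le> 1"
    and "T \<subseteq> S" and "S \<subseteq> V"
  shows "fp V w 1 \<delta> S = fp V w 1 \<delta> T + fp V w 1 \<delta> (S - T)"
proof -
  interpret nd2 V w \<delta>
    using assms by unfold_locales auto
  show ?thesis using main assms by blast
qed

end
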